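(* Assume $f$ is differentiable on $\mathbb{R}^m$ with $L$-Lipschitz continuous gradient ($L>0$), and let $\bar q$ be the (unique) minimizer of $f^*$ on $\mathbb{R}^m$. Then for all $k\in\mathbb{N}$, $$\|q_k\|_2\le \sqrt{2L\,(f^*(0)-f^*(\bar q))}+\|\bar q\|_2=:R.$$
   Context: Let $\Omega\subseteq\mathbb{R}^d$ be a nonempty open set, $a_1,\dots,a_m\in\mathcal{C}_0(\Omega)$, and $A^*q=\sum_{i=1}^m q_ia_i$ for $q\in\mathbb{R}^m$. Let $f:\mathbb{R}^m\to\mathbb{R}$ be convex and bounded from below, with convex conjugate $f^*(q)=\sup_y\langle q,y\rangle-f(y)$ (under the assumption, $f^*$ is $\tfrac1L$-strongly convex). For $\Omega'\subseteq\Omega$, $(\mathcal{D}(\Omega'))$ is the problem $\sup\{-f^*(q):q\in\mathbb{R}^m,\ |A^*q(x)|\le1\ \forall x\in\Omega'\}$. The sets $\Omega_k\subseteq\Omega$ are those produced by the exchange algorithm (given $\Omega_0$; $q_k$ solves $(\mathcal{D}(\Omega_k))$; $X_k$ is the set of local maximizers $x\in\Omega$ of $|A^*q_k|$ with $|A^*q_k(x)|>1$; $\Omega_{k+1}=\Omega_k\cup X_k$); in particular $q_k$ is the solution of $(\mathcal{D}(\Omega_k))$. *)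

theory Defs
  imports "HOL-Analysis.Analysis"
begin

(* C_0(Omega): continuous on Omega and vanishing at the boundary of Omega / at infinity *)
definition C0_on :: "('d::metric_space) set \<Rightarrow> ('d \<Rightarrow> real) \<Rightarrow> bool" where
  "C0_on \<Omega> g \<longleftrightarrow> continuous_on \<Omega> g \<and>
     (\<forall>\<epsilon>>0. \<exists>K. compact K \<and> K \<subseteq> \<Omega> \<and> (\<forall>x\<in>\<Omega> - K. \<bar>g x\<bar> < \<epsilon>))"

definition Astar :: "('m::finite \<Rightarrow> 'd \<Rightarrow> real) \<Rightarrow> real^'m \<Rightarrow> 'd \<Rightarrow> real" where
  "Astar a q x = (\<Sum>i\<in>UNIV. q $ i * a i x)"

definition fconj :: "(real^'m \<Rightarrow> real) \<Rightarrow> real^'m \<Rightarrow> ereal" where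
  "fconj f q = (SUP y. ereal (q \<bullet> y - f y))"

definition dual_feasible :: "('m::finite \<Rightarrow> 'd \<Rightarrow> real) \<Rightarrow> 'd set \<Rightarrow> real^'m \<Rightarrow> bool" where
  "dual_feasible a \<Omega>' q \<longleftrightarrow> (\<forall>x\<in>\<Omega>'. \<bar>Astar a q x\<bar> \<le> 1)"

definition solves_D :: "(real^'m \<Rightarrow> real) \<Rightarrow> ('m::finite \<Rightarrow> 'd \<Rightarrow> real) \<Rightarrow> 'd set \<Rightarrow> real^'m \<Rightarrow> bool" where
  "solves_D f a \<Omega>' q \<longleftrightarrow> dual_feasible a \<Omega>' q \<and>
     (\<forall>p. dual_feasible a \<Omega>' p \<longrightarrow> - fconj f p \<le> - fconj f q)"

definition exch_X :: "('m::finite \<Rightarrow> 'd::metric_space \<Rightarrow> real) \<Rightarrow> 'd set \<Rightarrow> real^'m \<Rightarrow> 'd set" where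
  "exch_X a \<Omega> q = {x\<in>\<Omega>. (\<exists>e>0. \<forall>y\<in>\<Omega>. dist y x < e \<longrightarrow> \<bar>Astar a q y\<bar> \<le> \<bar>Astar a q x\<bar>)
                           \<and> \<bar>Astar a q x\<bar> > 1}"

end

theory Submission
  imports Defs
begin

lemma line_deriv:
  fixes f :: "real^'m \<Rightarrow> real"
  assumes "\<And>y. (f has_derivative (\<lambda>h. g y \<bullet> h)) (at y)"
  shows "((\<lambda>t. f (t *\<^sub>R z)) has_real_derivative (g (t *\<^sub>R z) \<bullet> z)) (at t)"
proof -
  have "((\<lambda>t. t *\<^sub>R z) has_derivative (\<lambda>h. h *\<^sub>R z)) (at t)"
    by (auto intro!: derivative_eq_intros)
  from has_derivative_compose[OF this assms]
  have "((\<lambda>t. f (t *\<^sub>R z)) has_derivative (\<lambda>h. g (t *\<^sub>R z) \<bullet> (h *\<^sub>R z))) (at t)" .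
  moreover have "(\<lambda>h. g (t *\<^sub>R z) \<bullet> (h *\<^sub>R z)) = (\<lambda>h. h * (g (t *\<^sub>R z) \<bullet> z))"
    by (auto simp: inner_scaleR_right)
  ultimately show ?thesis by (simp add: has_field_derivative_def mult.commute[of _ "g (t *\<^sub>R z) \<bullet> z"])
qed

lemma tangent0:
  fixes f :: "real^'m \<Rightarrow> real"
  assumes "\<And>y. (f has_derivative (\<lambda>h. g y \<bullet> h)) (at y)"
    and "convex_on UNIV f"
  shows "f w \<ge> f 0 + g 0 \<bullet> w"
proof -
  have cv: "convex_on UNIV (\<lambda>t::real. f (t *\<^sub>R w))"
    using assms(2) unfolding convex_on_def
    apply (auto simp: scaleR_add_left[symmetric] scaleR_scaleR)
    apply (drule spec[of _ "_ *\<^sub>R w"], drule spec[of _ "_ *\<^sub>R w"])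
    by (auto simp: scaleR_add_left scaleR_scaleR)
  have d: "((\<lambda>t. f (t *\<^sub>R w)) has_real_derivative (g (0 *\<^sub>R w) \<bullet> w)) (at 0 within UNIV)"
    using line_deriv[OF assms(1), of w 0] by simp
  have "f (1 *\<^sub>R w) - f (0 *\<^sub>R w) \<ge> (g (0 *\<^sub>R w) \<bullet> w) * (1 - 0)"
    by (rule convex_on_imp_above_tangent[OF cv _ _ _ d]) auto
  then show ?thesis by simp
qed

lemma descent0:
  fixes f :: "real^'m \<Rightarrow> real"
  assumes "\<And>y. (f has_derivative (\<lambda>h. g y \<bullet> h)) (at y)"
    and "\<And>y z. norm (g y - g z) \<le> L * norm (y - z)"
  shows "f z \<le> f 0 + g 0 \<bullet> z + L / 2 * norm z ^ 2"
proof -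
  define \<psi> where "\<psi> t = f (t *\<^sub>R z) - t * (g 0 \<bullet> z) - L / 2 * t^2 * norm z ^ 2" for t
  define \<psi>' where "\<psi>' t = g (t *\<^sub>R z) \<bullet> z - g 0 \<bullet> z - L * t * norm z ^ 2" for t
  have D: "DERIV \<psi> t :> \<psi>' t" for t
    unfolding \<psi>_def \<psi>'_def
    by (auto intro!: derivative_eq_intros line_deriv[OF assms(1)])
  from MVT2[of 0 1 \<psi> \<psi>', OF _ D] obtain t where t: "0 < t" "t < 1" "\<psi> 1 - \<psi> 0 = (1 - 0) * \<psi>' t"
    by auto
  have "g (t *\<^sub>R z) \<bullet> z - g 0 \<bullet> z = (g (t *\<^sub>R z) - g 0) \<bullet> z" by (simp add: inner_diff_left)
  also have "\<dots> \<le> norm (g (t *\<^sub>R z) - g 0) * norm z" by (rule norm_cauchy_schwarz)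
  also have "\<dots> \<le> (L * norm (t *\<^sub>R z - 0)) * norm z"
    by (rule mult_right_mono[OF assms(2)]) auto
  also have "\<dots> = L * t * norm z ^ 2" using t by (simp add: power2_eq_square)
  finally have "\<psi>' t \<le> 0" unfolding \<psi>'_def by simp
  with t have "\<psi> 1 \<le> \<psi> 0" by simp
  then show ?thesis unfolding \<psi>_def by simp
qed

theorem mainTheorem2:
  fixes \<Omega> :: "(real^'d) set"
    and a :: "'m::finite \<Rightarrow> real^'d \<Rightarrow> real"
    and f :: "real^'m \<Rightarrow> real"
    and L :: real
    and g :: "real^'m \<Rightarrow> real^'m"
    and qbar :: "real^'m"
    and \<Omega>s :: "nat \<Rightarrow> (real^'d) set"
    and q :: "nat \<Rightarrow> real^'m"
  assumes "open \<Omega>" and "\<Omega> \<noteq> {}"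
    and "\<And>i. C0_on \<Omega> (a i)"
    and "convex_on UNIV f" and "bdd_below (range f)"
    and "L > 0"
    and "\<And>y. (f has_derivative (\<lambda>h. g y \<bullet> h)) (at y)"
    and "\<And>y z. norm (g y - g z) \<le> L * norm (y - z)"
    and "\<And>p. fconj f qbar \<le> fconj f p"
    and "\<Omega>s 0 \<subseteq> \<Omega>"
    and "\<And>k. solves_D f a (\<Omega>s k) (q k)"
    and "\<And>k. \<Omega>s (Suc k) = \<Omega>s k \<union> exch_X a \<Omega> (q k)"
  shows "\<forall>k. norm (q k) \<le>
           sqrt (2 * L * (real_of_ereal (fconj f 0) - real_of_ereal (fconj f qbar))) + norm qbar"
proof
  fix k
  have low: "ereal (p \<bullet> y - f y) \<le> fconj f p" for p y
    unfolding fconj_def by (rule SUP_upper) auto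
  obtain B where B: "\<And>y. B \<le> f y" using assms(5) by (auto simp: bdd_below_def)
  have up0: "fconj f 0 \<le> ereal (- B)"
    unfolding fconj_def by (rule SUP_least) (use B in auto)
  have low0: "ereal (- f 0) \<le> fconj f 0" using low[of 0 0] by simp
  define c where "c = real_of_ereal (fconj f 0)"
  have c: "fconj f 0 = ereal c"
    using up0 low0 unfolding c_def by (cases "fconj f 0") auto
  have upg: "fconj f (g 0) \<le> ereal (- f 0)"
    unfolding fconj_def by (rule SUP_least) (use tangent0[OF assms(7,4)] in \<open>auto simp: algebra_simps\<close>)
  have strong: "ereal (- f 0 + norm (p - g 0) ^ 2 / (2 * L)) \<le> fconj f p" for p
  proof -
    define y where "y = (1 / L) *\<^sub>R (p - g 0)"
    have "f y \<le> f 0 + g 0 \<bullet> y + L / 2 * norm y ^ 2" by (rule descent0[OF assms(7,8)])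
    moreover have "(p - g 0) \<bullet> y = norm (p - g 0) ^ 2 / L"
      unfolding y_def by (simp add: power2_norm_eq_inner)
    moreover have "norm y ^ 2 = norm (p - g 0) ^ 2 / L ^ 2"
      unfolding y_def using assms(6) by (simp add: power_divide)
    hence "L / 2 * norm y ^ 2 = norm (p - g 0) ^ 2 / (2 * L)"
      using assms(6) by (simp add: power2_eq_square)
    ultimately have "- f 0 + norm (p - g 0) ^ 2 / (2 * L) \<le> p \<bullet> y - f y"
      using assms(6) by (simp add: inner_diff_left)
    then show ?thesis using low[of p y] by (meson ereal_less_eq(3) order_trans)
  qed
  have "ereal (- f 0 + norm (qbar - g 0) ^ 2 / (2 * L)) \<le> ereal (- f 0)"
    using strong[of qbar] assms(9)[of "g 0"] upg by (meson order_trans)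
  hence "norm (qbar - g 0) ^ 2 / (2 * L) \<le> 0" by simp
  hence "norm (qbar - g 0) ^ 2 \<le> 0" using assms(6) by (simp add: divide_le_0_iff)
  hence qb: "qbar = g 0" by simp
  have fqb: "fconj f qbar = ereal (- f 0)"
    using qb upg strong[of qbar] by (simp add: antisym)
  have feas0: "dual_feasible a (\<Omega>s k) 0" by (simp add: dual_feasible_def Astar_def)
  have "- fconj f 0 \<le> - fconj f (q k)" using assms(11)[of k] feas0 by (simp add: solves_D_def)
  hence qk: "fconj f (q k) \<le> ereal c" using c by (metis ereal_minus_le_minus)
  have "ereal (- f 0 + norm (q k - qbar) ^ 2 / (2 * L)) \<le> ereal c"
    using strong[of "q k"] qk qb by (meson order_trans)
  hence "norm (q k - qbar) ^ 2 / (2 * L) \<le> c + f 0" by simp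
  hence "norm (q k - qbar) ^ 2 \<le> 2 * L * (c - (- f 0))" using assms(6) by (simp add: field_simps)
  hence "norm (q k - qbar) \<le> sqrt (2 * L * (c - (- f 0)))" by (rule real_le_rsqrt)
  moreover have "norm (q k) \<le> norm qbar + norm (q k - qbar)" by (rule norm_triangle_sub)
  ultimately show "norm (q k) \<le>
           sqrt (2 * L * (real_of_ereal (fconj f 0) - real_of_ereal (fconj f qbar))) + norm qbar"
    using fqb unfolding c_def by simp
qed

end
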